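(* Let $n\ge1$ and let $v=\mathrm{id}_{S^n}: S^n\to S^n$. Then the fundamental action on $[S^n\times S^n, S^n]^v$ is trivial.
   Context: $[S^n\times S^n,S^n]^v$ denotes the set of homotopy classes, relative the diagonal $D=\Delta(S^n)\subset S^n\times S^n$, of maps $f: S^n\times S^n\to S^n$ with $f\circ\Delta = v$. The fundamental action of $\pi_{n+1}(S^n)\cong[\Sigma_\ast D,S^n]^v$ (pointed self-homotopies of $v$) on this set is defined by extending such a self-homotopy to a homotopy starting at a given map $f$, using the homotopy extension property of $D\rightarrowtail S^n\times S^n$, and taking the end map. *)

theory Defs
  imports "HOL-Analysis.Analysis"
begin

definition diag :: "'a set \<Rightarrow> ('a \<times> 'a) set" where
  "diag S = (\<lambda>x. (x, x)) ` S"

definition diag_id_map :: "'a::topological_space set \<Rightarrow> ('a \<times> 'a \<Rightarrow> 'a) \<Rightarrow> bool" where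
  "diag_id_map S f \<longleftrightarrow> continuous_on (S \<times> S) f \<and> f ` (S \<times> S) \<subseteq> S \<and> (\<forall>x\<in>S. f (x, x) = x)"

definition homotopic_rel_diag :: "'a::real_normed_vector set \<Rightarrow> ('a \<times> 'a \<Rightarrow> 'a) \<Rightarrow> ('a \<times> 'a \<Rightarrow> 'a) \<Rightarrow> bool" where
  "homotopic_rel_diag S f g \<longleftrightarrow>
     homotopic_with_canon (\<lambda>k. \<forall>x\<in>S. k (x, x) = x) (S \<times> S) S f g"

definition pointed_self_homotopy_diag ::
    "'a::real_normed_vector set \<Rightarrow> 'a \<Rightarrow> (real \<times> ('a \<times> 'a) \<Rightarrow> 'a) \<Rightarrow> bool" where
  "pointed_self_homotopy_diag S b h \<longleftrightarrow>
     continuous_on ({0..1} \<times> diag S) h \<and> h ` ({0..1} \<times> diag S) \<subseteq> S \<and>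
     (\<forall>x\<in>S. h (0, (x, x)) = x \<and> h (1, (x, x)) = x) \<and>
     (\<forall>t\<in>{0..1}. h (t, (b, b)) = b)"

text \<open>g is an end map of an extension of the self-homotopy h to a homotopy starting at f,
  i.e. g is a representative of the result of the fundamental action of [h] on [f].\<close>
definition fundamental_action_result ::
    "'a::real_normed_vector set \<Rightarrow> ('a \<times> 'a \<Rightarrow> 'a) \<Rightarrow> (real \<times> ('a \<times> 'a) \<Rightarrow> 'a) \<Rightarrow> ('a \<times> 'a \<Rightarrow> 'a) \<Rightarrow> bool" where
  "fundamental_action_result S f h g \<longleftrightarrow>
     (\<exists>G. continuous_on ({0..1} \<times> (S \<times> S)) G \<and> G ` ({0..1} \<times> (S \<times> S)) \<subseteq> S \<and>
          (\<forall>p\<in>S \<times> S. G (0, p) = f p) \<and>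
          (\<forall>t\<in>{0..1}. \<forall>d\<in>diag S. G (t, d) = h (t, d)) \<and>
          g = (\<lambda>p. G (1, p)))"

end

theory Submission
  imports Defs
begin
lemma hwc_iff:
  assumes "\<And>h k. (\<And>x. x \<in> X \<Longrightarrow> h x = k x) \<Longrightarrow> (P h \<longleftrightarrow> P k)"
  shows "homotopic_with_canon P X Y f g \<longleftrightarrow>
    (\<exists>H. continuous_on ({0..1} \<times> X) H \<and> H ` ({0..1} \<times> X) \<subseteq> Y \<and>
       (\<forall>x\<in>X. H(0,x) = f x) \<and> (\<forall>x\<in>X. H(1,x) = g x) \<and> (\<forall>t\<in>{0..1::real}. P (\<lambda>x. H(t,x))))"
proof -
  have a: "\<And>h k. (\<And>x. x \<in> topspace (top_of_set X) \<Longrightarrow> h x = k x) \<Longrightarrow> (P h \<longleftrightarrow> P k)"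
    by (rule assms) simp
  have b: "continuous_map (prod_topology (top_of_set {0..1::real}) (top_of_set X)) (top_of_set Y) H
      \<longleftrightarrow> continuous_on ({0..1} \<times> X) H \<and> H ` ({0..1} \<times> X) \<subseteq> Y" for H
    by (simp add: image_subset_iff_funcset)
  show ?thesis
    apply (subst homotopic_with[OF a])
     apply blast
    apply (simp add: b image_subset_iff_funcset)
    done
qed

theorem corollary4p5:
  fixes S :: "'a::euclidean_space set"
    and b :: 'a
    and f g :: "'a \<times> 'a \<Rightarrow> 'a"
    and h :: "real \<times> ('a \<times> 'a) \<Rightarrow> 'a"
  assumes "DIM('a) \<ge> 2"
    and "S = sphere 0 1"
    and "b \<in> S"
    and "diag_id_map S f"
    and "pointed_self_homotopy_diag S b h"
    and "fundamental_action_result S f h g"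
  shows "homotopic_rel_diag S g f"
proof -
  define I where "I = {0..1::real}"
  define D where "D = diag S"
  have cS: "compact S" using assms(2) by simp
  have cD: "compact D" unfolding D_def diag_def
    by (intro compact_continuous_image cS continuous_intros)
  have DS: "D \<subseteq> S \<times> S" by (auto simp: D_def diag_def)
  have memD: "p \<in> D \<longleftrightarrow> (\<exists>x\<in>S. p = (x,x))" for p by (auto simp: D_def diag_def)
  have fc: "continuous_on (S \<times> S) f" and fS: "f ` (S \<times> S) \<subseteq> S" and fd: "\<And>x. x \<in> S \<Longrightarrow> f (x,x) = x"
    using assms(4) by (auto simp: diag_id_map_def)
  have hc: "continuous_on (I \<times> D) h" and hS: "h ` (I \<times> D) \<subseteq> S"
    and h0: "\<And>x. x \<in> S \<Longrightarrow> h (0,(x,x)) = x" and h1: "\<And>x. x \<in> S \<Longrightarrow> h (1,(x,x)) = x"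
    using assms(5) by (auto simp: pointed_self_homotopy_diag_def I_def D_def)
  obtain G where Gc: "continuous_on (I \<times> (S \<times> S)) G" and GS: "G ` (I \<times> (S \<times> S)) \<subseteq> S"
    and G0: "\<And>p. p \<in> S \<times> S \<Longrightarrow> G (0,p) = f p"
    and Gd: "\<And>t d. t \<in> I \<Longrightarrow> d \<in> D \<Longrightarrow> G (t,d) = h (t,d)"
    and gG: "g = (\<lambda>p. G (1,p))"
    using assms(6) unfolding fundamental_action_result_def I_def D_def by blast
  have gd: "g (x,x) = x" if "x \<in> S" for x
    using that Gd[of 1 "(x,x)"] h1 by (simp add: gG I_def memD)
  define T where "T = I \<times> (S \<times> S)"
  define A where "A = ({0,1} \<times> (S \<times> S)) \<union> (I \<times> D)"
  define Psi where "Psi = (\<lambda>x::real\<times>('a\<times>'a). if fst x \<le> 1/2 then G (1 - 2*fst x, snd x) else h (2*fst x - 1, (f (snd x), f (snd x))))"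
  define K where "K = (\<lambda>y::real\<times>(real\<times>('a\<times>'a)). if snd (snd y) \<in> D then h (max \<bar>1 - 2*fst (snd y)\<bar> (fst y), snd (snd y)) else if fst (snd y) = 0 then g (snd (snd y)) else f (snd (snd y)))"
  define F0 where "F0 = (\<lambda>(u::real,p::'a\<times>'a). if p \<in> D then fst p else if u = 0 then g p else f p)"
  have cT: "compact T" unfolding T_def I_def by (intro compact_Times cS) auto
  have cA: "compact A" unfolding A_def I_def by (intro compact_Un compact_Times cS cD) auto
  have AT: "A \<subseteq> T" using DS by (auto simp: A_def T_def I_def)
  have cloA: "closedin (top_of_set T) A"
    using AT cA by (simp add: closed_subset compact_imp_closed)
  have cSS: "closed (S \<times> S)" by (intro closed_Times compact_imp_closed cS)
  have clD: "closed D" using cD by (rule compact_imp_closed)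
  have fSS: "p \<in> S \<times> S \<Longrightarrow> f p \<in> S" for p using fS by blast
  have ffD: "p \<in> S \<times> S \<Longrightarrow> (f p, f p) \<in> D" for p using fSS by (auto simp: memD)
  have GSS: "t \<in> I \<Longrightarrow> p \<in> S \<times> S \<Longrightarrow> G (t,p) \<in> S" for t p using GS by blast
  have hDS: "t \<in> I \<Longrightarrow> p \<in> D \<Longrightarrow> h (t,p) \<in> S" for t p using hS by blast
  have gc: "continuous_on (S \<times> S) g"
    unfolding gG by (rule continuous_on_compose2[OF Gc, where f="\<lambda>p. (1,p)"]) (auto simp: I_def intro!: continuous_intros)
  have gSS: "p \<in> S \<times> S \<Longrightarrow> g p \<in> S" for p using GSS[of 1 p] by (simp add: gG I_def)
  have c1: "continuous_on ({0..1/2} \<times> (S \<times> S)) (\<lambda>x. G (1 - 2*fst x, snd x))"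
    by (rule continuous_on_compose2[OF Gc, where f="\<lambda>x. (1 - 2*fst x, snd x)"]) (auto simp: I_def intro!: continuous_intros)
  have cf2: "continuous_on ({1/2..1} \<times> (S \<times> S)) (\<lambda>x. f (snd x))"
    by (rule continuous_on_compose2[OF fc]) (auto intro!: continuous_intros)
  have c2: "continuous_on ({1/2..1} \<times> (S \<times> S)) (\<lambda>x. h (2*fst x - 1, (f (snd x), f (snd x))))"
    by (rule continuous_on_compose2[OF hc, where f="\<lambda>x. (2*fst x - 1, (f (snd x), f (snd x)))"])
       (auto simp: I_def ffD intro!: continuous_intros cf2)
  have Tsplit: "T = ({0..1/2} \<times> (S \<times> S)) \<union> ({1/2..1} \<times> (S \<times> S))"
    by (auto simp: T_def I_def)
  have Psic: "continuous_on T Psi"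
    unfolding Tsplit
  proof (rule continuous_on_closed_Un)
    show "closed ({0..1/2::real} \<times> (S \<times> S))" "closed ({1/2..1::real} \<times> (S \<times> S))"
      by (auto intro: closed_Times cSS)
    show "continuous_on ({0..1/2} \<times> (S \<times> S)) Psi"
      by (rule continuous_on_eq[OF c1]) (auto simp: Psi_def)
    show "continuous_on ({1/2..1} \<times> (S \<times> S)) Psi"
    proof (rule continuous_on_eq[OF c2])
      fix x :: "real \<times> ('a \<times> 'a)" assume x: "x \<in> {1/2..1} \<times> (S \<times> S)"
      show "h (2*fst x - 1, (f (snd x), f (snd x))) = Psi x"
      proof (cases "fst x = 1/2")
        case True
        then have e: "2*fst x - 1 = 0" "1 - 2*fst x = 0" by simp_all
        have P: "Psi x = G (1 - 2*fst x, snd x)" using True by (simp add: Psi_def)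
        have sx: "snd x \<in> S \<times> S" using x by auto
        show ?thesis unfolding P e using G0[OF sx] h0[OF fSS[OF sx]] by simp
      qed (use x in \<open>auto simp: Psi_def\<close>)
    qed
  qed
  have PsiS: "Psi \<in> T \<rightarrow> S"
  proof
    fix x assume x: "x \<in> T"
    show "Psi x \<in> S"
    proof (cases "fst x \<le> 1/2")
      case True
      then show ?thesis using x GSS[of "1 - 2*fst x" "snd x"] by (auto simp: Psi_def T_def I_def)
    next
      case False
      then show ?thesis using x hDS[of "2*fst x - 1" "(f (snd x), f (snd x))"] ffD[of "snd x"]
        by (auto simp: Psi_def T_def I_def)
    qed
  qed
  have AU: "I \<times> A = (I \<times> ({0} \<times> (S \<times> S))) \<union> ((I \<times> ({1} \<times> (S \<times> S))) \<union> (I \<times> (I \<times> D)))"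
    by (auto simp: A_def)
  have clI: "closed I" by (simp add: I_def)
  have hI: "max \<bar>1 - 2*u\<bar> s \<in> I" if "u \<in> I" "s \<in> I" for u s
    using that by (auto simp: I_def)
  have hmax1: "max \<bar>1 - 2*u\<bar> 1 = 1" if "u \<in> I" for u
    using that by (auto simp: I_def)
  have Kc: "continuous_on (I \<times> A) K"
    unfolding AU
  proof (intro continuous_on_closed_Un)
    show "closed (I \<times> ({0::real} \<times> (S \<times> S)))" "closed (I \<times> ({1::real} \<times> (S \<times> S)))"
         "closed (I \<times> (I \<times> D))" "closed (I \<times> ({1::real} \<times> (S \<times> S)) \<union> I \<times> (I \<times> D))"
      by (intro closed_Times closed_Un clI cSS clD closed_singleton)+
    have cg3: "continuous_on (I \<times> ({0::real} \<times> (S \<times> S))) (\<lambda>y. g (snd (snd y)))"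
      by (rule continuous_on_compose2[OF gc]) (auto intro!: continuous_intros)
    show "continuous_on (I \<times> ({0} \<times> (S \<times> S))) K"
    proof (rule continuous_on_eq[OF cg3])
      fix y :: "real \<times> real \<times> 'a \<times> 'a" assume y: "y \<in> I \<times> ({0} \<times> (S \<times> S))"
      show "g (snd (snd y)) = K y"
      proof (cases "snd (snd y) \<in> D")
        case True
        then obtain z where z: "z \<in> S" "snd (snd y) = (z,z)" by (auto simp: memD)
        have m: "max \<bar>1 - 2*fst (snd y)\<bar> (fst y) = 1" using y by (auto simp: I_def)
        show ?thesis using True z gd h1 by (simp add: K_def m)
      qed (use y in \<open>auto simp: K_def\<close>)
    qed
    have cf3: "continuous_on (I \<times> ({1::real} \<times> (S \<times> S))) (\<lambda>y. f (snd (snd y)))"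
      by (rule continuous_on_compose2[OF fc]) (auto intro!: continuous_intros)
    show "continuous_on (I \<times> ({1} \<times> (S \<times> S))) K"
    proof (rule continuous_on_eq[OF cf3])
      fix y :: "real \<times> real \<times> 'a \<times> 'a" assume y: "y \<in> I \<times> ({1} \<times> (S \<times> S))"
      show "f (snd (snd y)) = K y"
      proof (cases "snd (snd y) \<in> D")
        case True
        then obtain z where z: "z \<in> S" "snd (snd y) = (z,z)" by (auto simp: memD)
        have m: "max \<bar>1 - 2*fst (snd y)\<bar> (fst y) = 1" using y by (auto simp: I_def)
        show ?thesis using True z fd h1 by (simp add: K_def m)
      qed (use y in \<open>auto simp: K_def\<close>)
    qed
    have ch3: "continuous_on (I \<times> (I \<times> D)) (\<lambda>y. h (max \<bar>1 - 2*fst (snd y)\<bar> (fst y), snd (snd y)))"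
      by (rule continuous_on_compose2[OF hc, where f="\<lambda>y. (max \<bar>1 - 2*fst (snd y)\<bar> (fst y), snd (snd y))"])
         (auto intro!: continuous_intros hI)
    show "continuous_on (I \<times> (I \<times> D)) K"
      by (rule continuous_on_eq[OF ch3]) (auto simp: K_def)
  qed
  have KS: "K ` (I \<times> A) \<subseteq> S"
  proof clarify
    fix s u p assume s: "s \<in> I" and up: "(u,p) \<in> A"
    show "K (s,(u,p)) \<in> S"
    proof (cases "p \<in> D")
      case True
      have u: "u \<in> I" using up True DS by (auto simp: A_def I_def)
      show ?thesis using True hDS[OF hI[OF u s] True] by (simp add: K_def)
    next
      case False
      then show ?thesis using up gSS fSS by (auto simp: K_def A_def)
    qed
  qed
  have hom: "homotopic_with_canon (\<lambda>x. True) A S Psi F0"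
  proof (rule hwc_iff[THEN iffD2], simp, intro exI conjI ballI)
    show "continuous_on ({0..1} \<times> A) K" using Kc by (simp add: I_def)
    show "K ` ({0..1} \<times> A) \<subseteq> S" using KS by (simp add: I_def)
    show "True" by simp
    show "K (0, x) = Psi x" if x: "x \<in> A" for x
    proof -
      obtain u p where x': "x = (u,p)" by (cases x)
      show ?thesis
      proof (cases "p \<in> D")
        case True
        then obtain z where z: "z \<in> S" "p = (z,z)" by (auto simp: memD)
        have u: "u \<in> I" using x x' True z by (auto simp: A_def I_def)
        show ?thesis
        proof (cases "u \<le> 1/2")
          case True
          have a: "\<bar>1 - 2*u\<bar> = 1 - 2*u" using True by simp
          have "1 - 2*u \<in> I" using u True by (auto simp: I_def)
          then show ?thesis using True \<open>p \<in> D\<close> Gd[of "1 - 2*u" p] u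
            by (simp add: K_def Psi_def x' a I_def)
        next
          case False
          have a: "\<bar>1 - 2*u\<bar> = 2*u - 1" using False by simp
          show ?thesis using False \<open>p \<in> D\<close> z fd
            by (simp add: K_def Psi_def x' a)
        qed
      next
        case False
        then have u01: "u = 0 \<or> u = 1" and pS: "p \<in> S \<times> S" using x x' by (auto simp: A_def)
        from u01 show ?thesis
        proof
          assume "u = 0" then show ?thesis using False by (simp add: K_def Psi_def x' gG)
        next
          assume "u = 1" then show ?thesis using False h1[OF fSS[OF pS]] by (simp add: K_def Psi_def x')
        qed
      qed
    qed
    show "K (1, x) = F0 x" if x: "x \<in> A" for x
    proof -
      obtain u p where x': "x = (u,p)" by (cases x)
      show ?thesis
      proof (cases "p \<in> D")
        case True
        then obtain z where z: "z \<in> S" "p = (z,z)" by (auto simp: memD)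
        have u: "u \<in> I" using x x' True z by (auto simp: A_def I_def)
        show ?thesis using True z h1 hmax1[OF u] by (simp add: K_def F0_def x')
      qed (simp add: K_def F0_def x')
    qed
  qed
  have anr: "ANR S" using assms(2) ANR_sphere by simp
  obtain g' where "homotopic_with_canon (\<lambda>x. True) T S Psi g'"
    and g'c: "continuous_on T g'" and g'S: "g' ` T \<subseteq> S" and g'A: "\<And>x. x \<in> A \<Longrightarrow> g' x = F0 x"
    by (rule Borsuk_homotopy_extension_homotopic[OF cloA disjI2[OF anr] Psic PsiS hom]) blast
  show ?thesis
    unfolding homotopic_rel_diag_def
  proof (rule hwc_iff[THEN iffD2], simp, intro exI conjI ballI)
    show "continuous_on ({0..1} \<times> (S \<times> S)) g'" using g'c by (simp add: T_def I_def)
    show "g' ` ({0..1} \<times> (S \<times> S)) \<subseteq> S" using g'S by (simp add: T_def I_def)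
    show "g' (0, p) = g p" if "p \<in> S \<times> S" for p
      using that g'A[of "(0,p)"] gd by (auto simp: A_def F0_def memD)
    show "g' (1, p) = f p" if "p \<in> S \<times> S" for p
      using that g'A[of "(1,p)"] fd by (auto simp: A_def F0_def memD)
    show "g' (t, (x,x)) = x" if "t \<in> {0..1}" "x \<in> S" for t x
      using that g'A[of "(t,(x,x))"] by (auto simp: A_def F0_def memD I_def)
  qed
qed
end
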